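(* Let $\alpha$ be a strong composition of $r$ with $\ell(\alpha)\le n$. The map $\mathrm{wt}:\mathrm{QRT}(n,\alpha)\to\Lambda(n,r)_{\preceq\alpha^{\bullet}}$, $T\mapsto\mathrm{wt}(T)$, is a bijection.
   Context: A strong composition of $r$ is a sequence $\alpha=(\alpha_1,\dots,\alpha_k)$ of positive integers summing to $r$, with length $\ell(\alpha)=k$. For $\ell(\alpha)\le n$, $\alpha^\bullet\in\Lambda(n,r)$ is obtained by appending $n-k$ zeros. $\Lambda(n,r)$ is the set of weak compositions of $r$ with $n$ nonnegative parts. For $\mu,\lambda\in\Lambda(n,r)$, $\mu\preceq\lambda$ ($\mu$ refines $\lambda$) means $\mu$ is obtained by subdividing the parts of $\lambda$ in order. Precisely, if $\lambda=(\lambda_1,\dots,\lambda_t,0,\dots,0)$ with $\lambda_i>0$ for $i\le t$, there are indices $1=i_1<\dots<i_{t+1}=n+1$ with $\lambda_k=\mu_{i_k}+\dots+\mu_{i_{k+1}-1}$. $\Lambda(n,r)_{\preceq\lambda}=\{\mu\in\Lambda(n,r):\mu\preceq\lambda\}$. A quasi-ribbon tableau of shape $\alpha$ with entries in $\{1,\dots,n\}$ is a filling of the ribbon diagram of shape $\alpha$ such that entries weakly increase from left to right in each row and strictly increase from top to bottom in each column. The ribbon diagram has rows of lengths $\alpha_1,\dots,\alpha_k$ from top to bottom, where the first cell of each row lies directly below the last cell of the preceding row. $\mathrm{QRT}(n,\alpha)$ is the set of these. For $T\in\mathrm{QRT}(n,\alpha)$, $\mathrm{wt}(T)=(\mathrm{wt}(T)_1,\dots,\mathrm{wt}(T)_n)$,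 where $\mathrm{wt}(T)_i$ is the number of entries of $T$ equal to $i$. *)

theory Defs
  imports Main
begin

(* Compositions are lists; indices are 0-based (position k of a list is part k+1). *)

definition strong_comp :: "nat \<Rightarrow> nat list \<Rightarrow> bool" where
  "strong_comp r \<alpha> \<longleftrightarrow> (\<forall>a\<in>set \<alpha>. 0 < a) \<and> sum_list \<alpha> = r"

(* alpha^bullet : append n - l(alpha) zeros *)
definition pad :: "nat \<Rightarrow> nat list \<Rightarrow> nat list" where
  "pad n \<alpha> = \<alpha> @ replicate (n - length \<alpha>) 0"

definition Lambda :: "nat \<Rightarrow> nat \<Rightarrow> nat list set" where
  "Lambda n r = {\<mu>. length \<mu> = n \<and> sum_list \<mu> = r}"

definition refines :: "nat \<Rightarrow> nat list \<Rightarrow> nat list \<Rightarrow> bool" where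
  "refines n \<mu> lam \<longleftrightarrow> length \<mu> = n \<and> length lam = n \<and>
     (\<exists>t idx. t \<le> n \<and> (\<forall>k<t. 0 < lam ! k) \<and> (\<forall>k. t \<le> k \<and> k < n \<longrightarrow> lam ! k = 0) \<and>
        idx 0 = 0 \<and> idx t = n \<and> (\<forall>k<t. idx k < idx (Suc k)) \<and>
        (\<forall>k<t. lam ! k = (\<Sum>j\<in>{idx k..<idx (Suc k)}. \<mu> ! j)))"

definition Lambda_refining :: "nat \<Rightarrow> nat \<Rightarrow> nat list \<Rightarrow> nat list set" where
  "Lambda_refining n r lam = {\<mu> \<in> Lambda n r. refines n \<mu> lam}"

(* Ribbon diagram of shape alpha: row i (0-based, top to bottom) occupies columns
   row_start alpha i, ..., row_start alpha i + alpha_i - 1; the first cell of row i+1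
   lies directly below the last cell of row i. Cells are (row, column). *)
fun row_start :: "nat list \<Rightarrow> nat \<Rightarrow> nat" where
  "row_start \<alpha> 0 = 0"
| "row_start \<alpha> (Suc i) = row_start \<alpha> i + \<alpha> ! i - 1"

definition ribbon_cells :: "nat list \<Rightarrow> (nat \<times> nat) set" where
  "ribbon_cells \<alpha> = {(i, c). i < length \<alpha> \<and> row_start \<alpha> i \<le> c \<and> c < row_start \<alpha> i + \<alpha> ! i}"

definition QRT :: "nat \<Rightarrow> nat list \<Rightarrow> (nat \<times> nat \<Rightarrow> nat) set" where
  "QRT n \<alpha> = {T.
     (\<forall>x\<in>ribbon_cells \<alpha>. T x \<in> {1..n}) \<and>
     (\<forall>x. x \<notin> ribbon_cells \<alpha> \<longrightarrow> T x = 0) \<and>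
     (\<forall>i c c'. (i, c) \<in> ribbon_cells \<alpha> \<longrightarrow> (i, c') \<in> ribbon_cells \<alpha> \<longrightarrow> c \<le> c' \<longrightarrow> T (i, c) \<le> T (i, c')) \<and>
     (\<forall>i i' c. (i, c) \<in> ribbon_cells \<alpha> \<longrightarrow> (i', c) \<in> ribbon_cells \<alpha> \<longrightarrow> i < i' \<longrightarrow> T (i, c) < T (i', c))}"

definition wt :: "nat \<Rightarrow> nat list \<Rightarrow> (nat \<times> nat \<Rightarrow> nat) \<Rightarrow> nat list" where
  "wt n \<alpha> T = map (\<lambda>i. card {x \<in> ribbon_cells \<alpha>. T x = i}) [1..<n+1]"

end

theory Submission
  imports Defs
begin

definition psum :: "nat list \<Rightarrow> nat \<Rightarrow> nat" where
  "psum xs k = sum_list (take k xs)"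

lemma psum_mono: "i \<le> j \<Longrightarrow> psum xs i \<le> psum xs j"
proof -
  assume "i \<le> j"
  then obtain d where "j = i + d" using le_Suc_ex by blast
  then show ?thesis by (simp add: psum_def take_add)
qed

lemma psum_Suc: "k < length xs \<Longrightarrow> psum xs (Suc k) = psum xs k + xs ! k"
  by (simp add: psum_def take_Suc_conv_app_nth)

lemma psum_0[simp]: "psum xs 0 = 0"
  by (simp add: psum_def)

lemma psum_all: "length xs \<le> k \<Longrightarrow> psum xs k = sum_list xs"
  by (simp add: psum_def)

lemma psum_interval: "a \<le> b \<Longrightarrow> b \<le> length xs \<Longrightarrow> (\<Sum>j\<in>{a..<b}. xs!j) = psum xs b - psum xs a"
proof (induction b)
  case 0
  then show ?case by simp
next
  case (Suc b)
  show ?case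
  proof (cases "a = Suc b")
    case True
    then show ?thesis by simp
  next
    case False
    then have ab: "a \<le> b" using Suc by simp
    have "(\<Sum>j\<in>{a..<Suc b}. xs!j) = (\<Sum>j\<in>{a..<b}. xs!j) + xs ! b"
      using ab by simp
    also have "\<dots> = psum xs b - psum xs a + xs ! b" using Suc ab by simp
    also have "\<dots> = psum xs (Suc b) - psum xs a"
      using psum_Suc[of b xs] Suc(3) psum_mono[OF ab, of xs] by simp
    finally show ?thesis .
  qed
qed

lemma psum_eq_list: "length xs = length ys \<Longrightarrow> (\<And>j. j \<le> length xs \<Longrightarrow> psum xs j = psum ys j) \<Longrightarrow> xs = ys"
proof (rule nth_equalityI)
  fix i assume l: "length xs = length ys" and h: "\<And>j. j \<le> length xs \<Longrightarrow> psum xs j = psum ys j"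
    and i: "i < length xs"
  have "psum xs (Suc i) = psum ys (Suc i)" "psum xs i = psum ys i" using h i by auto
  then show "xs ! i = ys ! i" using psum_Suc[of i xs] psum_Suc[of i ys] i l by simp
qed simp

lemma chain_mono: "(\<And>k. Suc k \<le> t \<Longrightarrow> (f::nat\<Rightarrow>nat) k \<le> f (Suc k)) \<Longrightarrow> i \<le> j \<Longrightarrow> j \<le> t \<Longrightarrow> f i \<le> f j"
proof (induction j)
  case 0
  then show ?case by simp
next
  case (Suc j)
  show ?case
  proof (cases "i = Suc j")
    case True
    then show ?thesis by simp
  next
    case False
    then have "f i \<le> f j" using Suc by simp
    also have "f j \<le> f (Suc j)" using Suc by simp
    finally show ?thesis .
  qed
qed

lemma downset: assumes "finite A" and "\<And>q q'. q \<in> A \<Longrightarrow> q' \<le> q \<Longrightarrow> q' \<in> (A::nat set)"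
  shows "A = {..<card A}"
proof (cases "A = {}")
  case True
  then show ?thesis by simp
next
  case False
  define m where "m = Max A"
  have "A = {..m}"
  proof
    show "A \<subseteq> {..m}" using assms(1) m_def by auto
    show "{..m} \<subseteq> A" using assms Max_in[OF assms(1) False] m_def by auto
  qed
  then show ?thesis by (simp add: lessThan_Suc_atMost)
qed

definition pos :: "nat \<times> nat \<Rightarrow> nat" where "pos x = fst x + snd x"

locale Q =
  fixes n r :: nat and \<alpha> :: "nat list"
  assumes sc: "strong_comp r \<alpha>" and rpos: "0 < r" and len: "length \<alpha> \<le> n"
begin

abbreviation "L \<equiv> length \<alpha>"
abbreviation "S \<equiv> psum \<alpha>"
abbreviation "cells \<equiv> ribbon_cells \<alpha>"

lemma apos: "k < L \<Longrightarrow> 0 < \<alpha>!k"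
  using sc nth_mem unfolding strong_comp_def by blast

lemma SL: "S L = r"
  using sc by (simp add: psum_all strong_comp_def)

lemma S_Suc: "k < L \<Longrightarrow> S (Suc k) = S k + \<alpha>!k"
  by (rule psum_Suc)

lemma S_strict: "i < j \<Longrightarrow> j \<le> L \<Longrightarrow> S i < S j"
proof -
  assume a: "i < j" "j \<le> L"
  have "S i < S (Suc i)" using S_Suc[of i] apos[of i] a by simp
  also have "\<dots> \<le> S j" using psum_mono a by simp
  finally show ?thesis .
qed

lemma S_ge: "i \<le> L \<Longrightarrow> i \<le> S i"
proof (induction i)
  case 0
  then show ?case by simp
next
  case (Suc i)
  then show ?case using S_Suc[of i] apos[of i] by simp
qed

lemma Lpos: "0 < L"
  using sc rpos by (cases \<alpha>) (auto simp: strong_comp_def)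

lemma row_start_eq: "i \<le> L \<Longrightarrow> row_start \<alpha> i = S i - i"
proof (induction i)
  case 0
  then show ?case by simp
next
  case (Suc i)
  then have "i < L" by simp
  then show ?case using Suc S_Suc[of i] apos[of i] S_ge[of i] by simp
qed

lemma cells_iff: "(i,c) \<in> cells \<longleftrightarrow> i < L \<and> S i \<le> c + i \<and> c + i < S (Suc i)"
proof -
  have "i < L \<Longrightarrow> row_start \<alpha> i = S i - i \<and> i \<le> S i \<and> S (Suc i) = S i + \<alpha>!i"
    using row_start_eq S_ge S_Suc by simp
  then show ?thesis unfolding ribbon_cells_def by auto
qed

lemma row_unique:
  assumes "i < L" "i' < L" "S i \<le> p" "p < S (Suc i)" "S i' \<le> p" "p < S (Suc i')"
  shows "i = i'"
proof (rule ccontr)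
  assume "i \<noteq> i'"
  then consider "Suc i \<le> i'" | "Suc i' \<le> i" by linarith
  then show False
  proof cases
    case 1
    then show ?thesis using psum_mono[OF 1, of \<alpha>] assms by simp
  next
    case 2
    then show ?thesis using psum_mono[OF 2, of \<alpha>] assms by simp
  qed
qed

lemma inj_pos: "inj_on pos cells"
proof (rule inj_onI)
  fix x y assume "x \<in> cells" "y \<in> cells" "pos x = pos y"
  moreover obtain i c i' c' where "x = (i,c)" "y = (i',c')" by fastforce
  ultimately show "x = y" using row_unique[of i i' "c+i"] cells_iff by (auto simp: pos_def)
qed

lemma pos_img: "pos ` cells = {..<r}"
proof
  show "pos ` cells \<subseteq> {..<r}"
  proof
    fix p assume "p \<in> pos ` cells"
    then obtain i c where "(i,c) \<in> cells" "p = c + i" by (auto simp: pos_def)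
    then have "i < L" "p < S (Suc i)" using cells_iff by auto
    moreover have "S (Suc i) \<le> S L" using psum_mono \<open>i < L\<close> by simp
    ultimately show "p \<in> {..<r}" using SL by simp
  qed
next
  show "{..<r} \<subseteq> pos ` cells"
  proof
    fix p assume "p \<in> {..<r}"
    then have pr: "p < r" by simp
    define i where "i = (LEAST i. p < S (Suc i))"
    have ex: "p < S (Suc (L - 1))" using pr SL Lpos by simp
    have "i \<le> L - 1" unfolding i_def by (rule Least_le) (rule ex)
    then have iL: "i < L" using Lpos by linarith
    have p1: "p < S (Suc i)" unfolding i_def by (rule LeastI) (rule ex)
    have p2: "S i \<le> p"
    proof (cases i)
      case 0
      then show ?thesis by simp
    next
      case (Suc j)
      have "\<not> p < S (Suc j)" using not_less_Least[of j "\<lambda>i. p < S (Suc i)"] Suc i_def by simp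
      then show ?thesis using Suc by simp
    qed
    have "i \<le> p" using S_ge[of i] iL p2 by simp
    then have "(i, p - i) \<in> cells" using cells_iff iL p1 p2 by simp
    moreover have "pos (i, p - i) = p" using \<open>i \<le> p\<close> by (simp add: pos_def)
    ultimately show "p \<in> pos ` cells" by force
  qed
qed

definition "cellof = inv_into cells pos"

lemma cellof: "p < r \<Longrightarrow> cellof p \<in> cells \<and> pos (cellof p) = p"
  unfolding cellof_def using pos_img by (metis inv_into_into f_inv_into_f lessThan_iff)

lemma cellof_pos: "x \<in> cells \<Longrightarrow> cellof (pos x) = x"
  unfolding cellof_def using inj_pos by simp

definition wvec :: "(nat \<Rightarrow> nat) \<Rightarrow> nat list" where
  "wvec W = map (\<lambda>v. card {p. p < r \<and> W p = v}) [1..<n+1]"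

definition good :: "(nat \<Rightarrow> nat) \<Rightarrow> bool" where
  "good W \<longleftrightarrow> (\<forall>p<r. 1 \<le> W p \<and> W p \<le> n) \<and> (\<forall>p q. p \<le> q \<longrightarrow> q < r \<longrightarrow> W p \<le> W q) \<and>
     (\<forall>k. 0 < k \<longrightarrow> k < L \<longrightarrow> W (S k - 1) < W (S k))"

lemma wt_via: assumes "\<forall>x\<in>cells. T x = W (pos x)" shows "wt n \<alpha> T = wvec W"
  unfolding wt_def wvec_def
proof (rule map_cong[OF refl])
  fix v
  have "{x \<in> cells. T x = v} = {x \<in> cells. W (pos x) = v}" using assms by auto
  then have "card {x \<in> cells. T x = v} = card (pos ` {x \<in> cells. W (pos x) = v})"
    using card_image[OF inj_on_subset[OF inj_pos]] by force
  also have "pos ` {x \<in> cells. W (pos x) = v} = {p \<in> pos ` cells. W p = v}" by auto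
  also have "\<dots> = {p. p < r \<and> W p = v}" using pos_img by auto
  finally show "card {x \<in> cells. T x = v} = card {p. p < r \<and> W p = v}" .
qed


lemma qrt_good: assumes T: "T \<in> QRT n \<alpha>" shows "good (\<lambda>p. T (cellof p))"
proof -
  define W where "W = (\<lambda>p. T (cellof p))"
  have vals: "\<forall>p<r. 1 \<le> W p \<and> W p \<le> n"
    using T cellof unfolding QRT_def W_def by fastforce
  have step: "W p \<le> W (Suc p) \<and> (\<forall>k. 0 < k \<longrightarrow> k < L \<longrightarrow> Suc p = S k \<longrightarrow> W p < W (Suc p))"
    if sp: "Suc p < r" for p
  proof -
    obtain i c where x: "cellof p = (i,c)" by fastforce
    obtain i' c' where y: "cellof (Suc p) = (i',c')" by fastforce
    have cx: "(i,c) \<in> cells" "c + i = p" using cellof[of p] sp x by (auto simp: pos_def)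
    have cy: "(i',c') \<in> cells" "c' + i' = Suc p" using cellof[of "Suc p"] sp y by (auto simp: pos_def)
    have ri: "i < L" "S i \<le> p" "p < S (Suc i)" using cx cells_iff by auto
    have ri': "i' < L" "S i' \<le> Suc p" "Suc p < S (Suc i')" using cy cells_iff by auto
    have "i' = i \<or> i' = Suc i"
    proof (rule ccontr)
      assume "\<not> (i' = i \<or> i' = Suc i)"
      then consider "i' < i" | "Suc (Suc i) \<le> i'" by linarith
      then show False
      proof cases
        case 1
        then have "S (Suc i') \<le> S i" using psum_mono by simp
        then show False using ri ri' by simp
      next
        case 2
        then have "S (Suc i) < S (Suc (Suc i))" using S_strict ri' by simp
        moreover have "S (Suc (Suc i)) \<le> S i'" using psum_mono 2 by simp
        ultimately show False using ri ri' by simp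
      qed
    qed
    then show ?thesis
    proof
      assume e: "i' = i"
      then have "c' = Suc c" using cx cy by simp
      then have le: "T (i,c) \<le> T (i',c')" using T cx cy e unfolding QRT_def by auto
      have "\<not> (0 < k \<and> k < L \<and> Suc p = S k)" for k
      proof
        assume k: "0 < k \<and> k < L \<and> Suc p = S k"
        have "S i < S k" using ri k by simp
        then have "i < k" using psum_mono[of k i \<alpha>] by (cases "k \<le> i") auto
        moreover have "S k < S (Suc i)" using ri' k e by simp
        then have "k < Suc i" using psum_mono[of "Suc i" k \<alpha>] by (cases "Suc i \<le> k") auto
        ultimately show False by simp
      qed
      then show ?thesis using le x y W_def by auto
    next
      assume e: "i' = Suc i"
      then have "c' = c" using cx cy by simp
      then have "T (i,c) < T (i',c')" using T cx cy e unfolding QRT_def by auto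
      then show ?thesis using x y W_def by auto
    qed
  qed
  have mono: "\<forall>p q. p \<le> q \<longrightarrow> q < r \<longrightarrow> W p \<le> W q"
  proof (intro allI impI)
    fix p q assume "p \<le> q" "q < r"
    show "W p \<le> W q"
      by (rule chain_mono[of "r - 1"]) (use step \<open>p \<le> q\<close> \<open>q < r\<close> in auto)
  qed
  have bd: "\<forall>k. 0 < k \<longrightarrow> k < L \<longrightarrow> W (S k - 1) < W (S k)"
  proof (intro allI impI)
    fix k assume k: "0 < k" "k < L"
    have "k \<le> S k" using S_ge k by simp
    moreover have "S k < r" using S_strict[of k L] k SL by simp
    ultimately show "W (S k - 1) < W (S k)" using step[of "S k - 1"] k by simp
  qed
  show ?thesis using vals mono bd unfolding good_def W_def by blast
qed

lemma good_qrt: assumes g: "good W" shows "(\<lambda>x. if x \<in> cells then W (pos x) else 0) \<in> QRT n \<alpha>"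
proof -
  have posr: "x \<in> cells \<Longrightarrow> pos x < r" for x using pos_img by auto
  have vals: "\<forall>p<r. 1 \<le> W p \<and> W p \<le> n" and mono: "\<forall>p q. p \<le> q \<longrightarrow> q < r \<longrightarrow> W p \<le> W q"
    and bd: "\<forall>k. 0 < k \<longrightarrow> k < L \<longrightarrow> W (S k - 1) < W (S k)" using g unfolding good_def by blast+
  have col: "W (c + i) < W (c + i')" if a: "(i,c) \<in> cells" "(i',c) \<in> cells" "i < i'" for i i' c
  proof -
    have h: "c + i < S (Suc i)" "S i' \<le> c + i'" "i' < L" using a cells_iff by auto
    have "S (Suc i) \<le> S i'" using psum_mono a by simp
    have r1: "c + i' < r" using posr[OF a(2)] by (simp add: pos_def)
    have "Suc i < L" using a h by simp
    then have "W (S (Suc i) - 1) < W (S (Suc i))" using bd by simp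
    moreover have "W (c + i) \<le> W (S (Suc i) - 1)" using mono h r1 \<open>S (Suc i) \<le> S i'\<close> by simp
    moreover have "W (S (Suc i)) \<le> W (c + i')" using mono h r1 \<open>S (Suc i) \<le> S i'\<close> by simp
    ultimately show ?thesis by simp
  qed
  show ?thesis unfolding QRT_def
  proof (intro CollectI conjI allI ballI impI)
    fix x assume "x \<in> cells"
    then show "(if x \<in> cells then W (pos x) else 0) \<in> {1..n}" using vals posr by auto
  next
    fix x assume "x \<notin> cells" then show "(if x \<in> cells then W (pos x) else 0) = 0" by simp
  next
    fix i c c' assume "(i, c) \<in> cells" "(i, c') \<in> cells" "c \<le> c'"
    then show "(if (i, c) \<in> cells then W (pos (i, c)) else 0) \<le> (if (i, c') \<in> cells then W (pos (i, c')) else 0)"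
      using mono posr[of "(i,c')"] by (simp add: pos_def)
  next
    fix i i' c assume "(i, c) \<in> cells" "(i', c) \<in> cells" "i < i'"
    then show "(if (i, c) \<in> cells then W (pos (i, c)) else 0) < (if (i', c) \<in> cells then W (pos (i', c)) else 0)"
      using col[OF \<open>(i, c) \<in> cells\<close> \<open>(i', c) \<in> cells\<close> \<open>i < i'\<close>] by (simp add: pos_def add.commute)
  qed
qed

lemma len_wvec: "length (wvec W) = n" by (simp add: wvec_def)

lemma cnt_psum: assumes "\<forall>p<r. 1 \<le> W p \<and> W p \<le> n"
  shows "j \<le> n \<Longrightarrow> psum (wvec W) j = card {p. p < r \<and> W p \<le> j}"
proof (induction j)
  case 0
  have "{p. p < r \<and> W p \<le> 0} = {}" using assms by fastforce
  then show ?case by simp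
next
  case (Suc j)
  have "psum (wvec W) (Suc j) = psum (wvec W) j + wvec W ! j"
    using psum_Suc[of j "wvec W"] Suc len_wvec by simp
  also have "wvec W ! j = card {p. p < r \<and> W p = Suc j}"
    using Suc by (simp add: wvec_def del: upt_Suc)
  also have "psum (wvec W) j = card {p. p < r \<and> W p \<le> j}" using Suc by simp
  also have "card {p. p < r \<and> W p \<le> j} + card {p. p < r \<and> W p = Suc j} =
      card ({p. p < r \<and> W p \<le> j} \<union> {p. p < r \<and> W p = Suc j})"
    by (rule card_Un_disjoint[symmetric]) auto
  also have "{p. p < r \<and> W p \<le> j} \<union> {p. p < r \<and> W p = Suc j} = {p. p < r \<and> W p \<le> Suc j}" by auto
  finally show ?case .
qed

lemma mono_iff: fixes W :: "nat \<Rightarrow> nat" assumes "\<forall>p q. p \<le> q \<longrightarrow> q < r \<longrightarrow> W p \<le> W q" and "p < r"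
  shows "W p \<le> j \<longleftrightarrow> p < card {q. q < r \<and> W q \<le> j}"
proof -
  define A where "A = {q. q < r \<and> W q \<le> j}"
  have eq: "A = {..<card A}"
  proof (rule downset)
    show "finite A" unfolding A_def by simp
    fix q q' assume "q \<in> A" "q' \<le> q"
    then have "q < r" "W q \<le> j" "q' < r" unfolding A_def by auto
    moreover have "W q' \<le> W q" using assms(1) \<open>q' \<le> q\<close> \<open>q < r\<close> by blast
    ultimately show "q' \<in> A" unfolding A_def by simp
  qed
  have "p \<in> A \<longleftrightarrow> p < card A" by (metis eq lessThan_iff)
  then show ?thesis using assms(2) unfolding A_def by simp
qed

lemma good_inj: assumes "good W1" "good W2" "wvec W1 = wvec W2" "p < r" shows "W1 p = W2 p"
proof -
  have v1: "\<forall>p<r. 1 \<le> W1 p \<and> W1 p \<le> n" and m1: "\<forall>p q. p \<le> q \<longrightarrow> q < r \<longrightarrow> W1 p \<le> W1 q"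
    using assms(1) unfolding good_def by blast+
  have v2: "\<forall>p<r. 1 \<le> W2 p \<and> W2 p \<le> n" and m2: "\<forall>p q. p \<le> q \<longrightarrow> q < r \<longrightarrow> W2 p \<le> W2 q"
    using assms(2) unfolding good_def by blast+
  have key: "W1 p \<le> j \<longleftrightarrow> W2 p \<le> j" if "j \<le> n" for j
    using mono_iff[OF m1 assms(4), of j] mono_iff[OF m2 assms(4), of j]
      cnt_psum[OF v1 that] cnt_psum[OF v2 that] assms(3) by simp
  show ?thesis using key[of "W1 p"] key[of "W2 p"] v1 v2 assms(4) by fastforce
qed

lemma pad_nth: "k < n \<Longrightarrow> pad n \<alpha> ! k = (if k < L then \<alpha> ! k else 0)"
  by (auto simp: pad_def nth_append)

lemma len_pad: "length (pad n \<alpha>) = n" using len by (simp add: pad_def)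

lemma good_img: assumes g: "good W" shows "wvec W \<in> Lambda_refining n r (pad n \<alpha>)"
proof -
  have vals: "\<forall>p<r. 1 \<le> W p \<and> W p \<le> n" and mono: "\<forall>p q. p \<le> q \<longrightarrow> q < r \<longrightarrow> W p \<le> W q"
    and bd: "\<forall>k. 0 < k \<longrightarrow> k < L \<longrightarrow> W (S k - 1) < W (S k)" using g unfolding good_def by blast+
  define \<mu> where "\<mu> = wvec W"
  have lm: "length \<mu> = n" by (simp add: \<mu>_def len_wvec)
  have P: "j \<le> n \<Longrightarrow> psum \<mu> j = card {p. p < r \<and> W p \<le> j}" for j
    using cnt_psum[OF vals] \<mu>_def by simp
  have Pn: "psum \<mu> n = r"
  proof -
    have "{p. p < r \<and> W p \<le> n} = {..<r}" using vals by auto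
    then show ?thesis using P[of n] by simp
  qed
  have sum: "sum_list \<mu> = r" using Pn psum_all[of \<mu> n] lm by simp
  define idx where "idx k = (if k = 0 then 0 else if k < L then W (S k - 1) else n)" for k
  have key: "idx k \<le> n \<and> psum \<mu> (idx k) = S k" if k: "k \<le> L" for k
  proof -
    consider "k = 0" | "k = L" | "0 < k \<and> k < L" using k by linarith
    then show ?thesis
    proof cases
      case 1
      then show ?thesis by (simp add: idx_def)
    next
      case 2
      then show ?thesis using Lpos Pn SL by (simp add: idx_def)
    next
      case 3
      have Sk: "k \<le> S k" "S k < r" using S_ge[of k] S_strict[of k L] 3 SL by auto
      have "{p. p < r \<and> W p \<le> W (S k - 1)} = {..<S k}"
      proof (rule set_eqI, rule iffI)
        fix q assume q: "q \<in> {p. p < r \<and> W p \<le> W (S k - 1)}"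
        show "q \<in> {..<S k}"
        proof (rule ccontr)
          assume "q \<notin> {..<S k}"
          then have "W (S k) \<le> W q" using mono q by simp
          moreover have "W (S k - 1) < W (S k)" using bd 3 by blast
          ultimately show False using q by simp
        qed
      next
        fix q assume "q \<in> {..<S k}"
        then show "q \<in> {p. p < r \<and> W p \<le> W (S k - 1)}" using mono Sk by auto
      qed
      moreover have "W (S k - 1) \<le> n" using vals Sk by simp
      ultimately show ?thesis using 3 P by (simp add: idx_def)
    qed
  qed
  have strict: "idx k < idx (Suc k)" if "k < L" for k
  proof (rule ccontr)
    assume "\<not> idx k < idx (Suc k)"
    then have "psum \<mu> (idx (Suc k)) \<le> psum \<mu> (idx k)" using psum_mono by simp
    then show False using key[of k] key[of "Suc k"] S_strict[of k "Suc k"] that by simp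
  qed
  have blocks: "pad n \<alpha> ! k = (\<Sum>j\<in>{idx k..<idx (Suc k)}. \<mu> ! j)" if "k < L" for k
  proof -
    have "(\<Sum>j\<in>{idx k..<idx (Suc k)}. \<mu> ! j) = psum \<mu> (idx (Suc k)) - psum \<mu> (idx k)"
      using psum_interval strict[OF that] key[of "Suc k"] that lm by simp
    also have "\<dots> = \<alpha> ! k" using key[of k] key[of "Suc k"] that S_Suc[OF that] by simp
    finally show ?thesis using pad_nth that len by simp
  qed
  have "refines n \<mu> (pad n \<alpha>)"
    unfolding refines_def
  proof (intro conjI exI[of _ L] exI[of _ idx])
    show "length \<mu> = n" by (rule lm)
    show "length (pad n \<alpha>) = n" by (rule len_pad)
    show "L \<le> n" by (rule len)
    show "\<forall>k<L. 0 < pad n \<alpha> ! k" using pad_nth apos len by simp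
    show "\<forall>k. L \<le> k \<and> k < n \<longrightarrow> pad n \<alpha> ! k = 0" using pad_nth by simp
    show "idx 0 = 0" by (simp add: idx_def)
    show "idx L = n" using Lpos by (simp add: idx_def)
    show "\<forall>k<L. idx k < idx (Suc k)" using strict by blast
    show "\<forall>k<L. pad n \<alpha> ! k = (\<Sum>j\<in>{idx k..<idx (Suc k)}. \<mu> ! j)" using blocks by blast
  qed
  then show ?thesis using lm sum \<mu>_def unfolding Lambda_refining_def Lambda_def by simp
qed

lemma good_surj: assumes m: "\<mu> \<in> Lambda_refining n r (pad n \<alpha>)" shows "\<exists>W. good W \<and> wvec W = \<mu>"
proof -
  have lm: "length \<mu> = n" and sum: "sum_list \<mu> = r" and rf: "refines n \<mu> (pad n \<alpha>)"
    using m unfolding Lambda_refining_def Lambda_def by auto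
  obtain t idx where t: "t \<le> n" "\<forall>k<t. 0 < pad n \<alpha> ! k" "\<forall>k. t \<le> k \<and> k < n \<longrightarrow> pad n \<alpha> ! k = 0"
    "idx 0 = 0" "idx t = n" "\<forall>k<t. idx k < idx (Suc k)"
    "\<forall>k<t. pad n \<alpha> ! k = (\<Sum>j\<in>{idx k..<idx (Suc k)}. \<mu> ! j)"
    using rf unfolding refines_def by blast
  have tL: "t = L"
  proof (rule ccontr)
    assume "t \<noteq> L"
    then consider "t < L" | "L < t" by linarith
    then show False
    proof cases
      case 1
      then show False using t(3)[rule_format, of t] pad_nth[of t] apos[of t] len by simp
    next
      case 2
      then show False using t(2)[rule_format, of L] pad_nth[of L] t(1) by simp
    qed
  qed
  have idxle: "idx i \<le> idx j" if "i \<le> j" "j \<le> L" for i j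
  proof (rule chain_mono[of L idx i j])
    fix k assume "Suc k \<le> L"
    then show "idx k \<le> idx (Suc k)" using t(6) tL by (simp add: less_imp_le)
  qed (use that in auto)
  have idxn: "idx k \<le> n" if "k \<le> L" for k using idxle[OF that order_refl] t(5) tL by simp
  define P where "P = psum \<mu>"
  have Pmono: "i \<le> j \<Longrightarrow> P i \<le> P j" for i j using psum_mono P_def by simp
  have Pn: "P n = r" using psum_all[of \<mu> n] lm sum P_def by simp
  have PS: "P (idx k) = S k" if "k \<le> L" for k
    using that
  proof (induction k)
    case 0
    then show ?case using t(4) P_def by simp
  next
    case (Suc k)
    then have kL: "k < L" by simp
    have "\<alpha> ! k = (\<Sum>j\<in>{idx k..<idx (Suc k)}. \<mu> ! j)"
      using t(7) tL kL pad_nth[of k] len by simp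
    also have "\<dots> = P (idx (Suc k)) - P (idx k)"
      using psum_interval idxle[of k "Suc k"] idxn[of "Suc k"] Suc(2) lm P_def by simp
    finally have "\<alpha> ! k = P (idx (Suc k)) - P (idx k)" .
    moreover have "P (idx k) \<le> P (idx (Suc k))" using Pmono idxle[of k "Suc k"] Suc(2) by simp
    ultimately show ?case using Suc S_Suc[OF kL] by simp
  qed
  define W where "W p = (LEAST j. p < P j)" for p
  have Wiff: "W p \<le> j \<longleftrightarrow> p < P j" if "p < r" for p j
  proof
    have ex: "p < P n" using that Pn by simp
    have "p < P (W p)" unfolding W_def by (rule LeastI) (rule ex)
    moreover assume "W p \<le> j"
    ultimately show "p < P j" using Pmono[of "W p" j] by simp
  next
    assume "p < P j"
    then show "W p \<le> j" unfolding W_def by (rule Least_le)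
  qed
  have vals: "\<forall>p<r. 1 \<le> W p \<and> W p \<le> n"
  proof (intro allI impI conjI)
    fix p assume p: "p < r"
    show "W p \<le> n" using Wiff[OF p] Pn p by simp
    have "\<not> W p \<le> 0" using Wiff[OF p, of 0] P_def by simp
    then show "1 \<le> W p" by simp
  qed
  have mono: "\<forall>p q. p \<le> q \<longrightarrow> q < r \<longrightarrow> W p \<le> W q"
  proof (intro allI impI)
    fix p q assume pq: "p \<le> q" "q < r"
    have "q < P (W q)" using Wiff[OF pq(2), of "W q"] by simp
    then show "W p \<le> W q" using Wiff[of p "W q"] pq by simp
  qed
  have bd: "\<forall>k. 0 < k \<longrightarrow> k < L \<longrightarrow> W (S k - 1) < W (S k)"
  proof (intro allI impI)
    fix k assume k: "0 < k" "k < L"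
    have Sk: "k \<le> S k" "S k < r" using S_ge[of k] S_strict[of k L] k SL by auto
    have e: "P (idx k) = S k" using PS k by simp
    have "W (S k - 1) \<le> idx k" using Wiff[of "S k - 1" "idx k"] Sk e k(1) by simp
    moreover have "\<not> W (S k) \<le> idx k" using Wiff[of "S k" "idx k"] Sk e by simp
    ultimately show "W (S k - 1) < W (S k)" by simp
  qed
  have g: "good W" using vals mono bd unfolding good_def by blast
  have "wvec W = \<mu>"
  proof (rule psum_eq_list)
    show "length (wvec W) = length \<mu>" using lm len_wvec by simp
    fix j assume "j \<le> length (wvec W)"
    then have j: "j \<le> n" using len_wvec by simp
    have "{p. p < r \<and> W p \<le> j} = {..<P j}"
      using Wiff Pmono[OF j] Pn by auto
    then show "psum (wvec W) j = psum \<mu> j" using cnt_psum[OF vals j] P_def by simp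
  qed
  then show ?thesis using g by blast
qed

theorem main: "bij_betw (wt n \<alpha>) (QRT n \<alpha>) (Lambda_refining n r (pad n \<alpha>))"
proof -
  have wtT: "wt n \<alpha> T = wvec (\<lambda>p. T (cellof p))" for T
    by (rule wt_via) (simp add: cellof_pos)
  have inj: "inj_on (wt n \<alpha>) (QRT n \<alpha>)"
  proof (rule inj_onI)
    fix T1 T2 assume T: "T1 \<in> QRT n \<alpha>" "T2 \<in> QRT n \<alpha>" "wt n \<alpha> T1 = wt n \<alpha> T2"
    have eq: "T1 (cellof p) = T2 (cellof p)" if "p < r" for p
      using good_inj[OF qrt_good[OF T(1)] qrt_good[OF T(2)] _ that] T(3) wtT by simp
    show "T1 = T2"
    proof
      fix x
      show "T1 x = T2 x"
      proof (cases "x \<in> cells")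
        case True
        then have "pos x < r" using pos_img by auto
        then show ?thesis using eq[of "pos x"] cellof_pos[OF True] by simp
      next
        case False
        have "T1 x = 0" "T2 x = 0" using T(1,2) False unfolding QRT_def by blast+
        then show ?thesis by simp
      qed
    qed
  qed
  have img: "wt n \<alpha> ` QRT n \<alpha> = Lambda_refining n r (pad n \<alpha>)"
  proof
    show "wt n \<alpha> ` QRT n \<alpha> \<subseteq> Lambda_refining n r (pad n \<alpha>)"
      using wtT good_img qrt_good by auto
  next
    show "Lambda_refining n r (pad n \<alpha>) \<subseteq> wt n \<alpha> ` QRT n \<alpha>"
    proof
      fix \<mu> assume "\<mu> \<in> Lambda_refining n r (pad n \<alpha>)"
      then obtain W where W: "good W" "wvec W = \<mu>" using good_surj by blast
      define T where "T = (\<lambda>x. if x \<in> cells then W (pos x) else 0)"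
      have "T \<in> QRT n \<alpha>" using good_qrt[OF W(1)] T_def by simp
      moreover have "wt n \<alpha> T = \<mu>" using wt_via[of T W] W(2) T_def by simp
      ultimately show "\<mu> \<in> wt n \<alpha> ` QRT n \<alpha>" by blast
    qed
  qed
  show ?thesis using inj img by (simp add: bij_betw_def)
qed

end

theorem mainTheorem6:
  fixes n r :: nat and \<alpha> :: "nat list"
  assumes "strong_comp r \<alpha>" and "0 < r" and "length \<alpha> \<le> n"
  shows "bij_betw (wt n \<alpha>) (QRT n \<alpha>) (Lambda_refining n r (pad n \<alpha>))"
proof -
  interpret Q n r \<alpha> using assms by unfold_locales
  show ?thesis by (rule main)
qed

end
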